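(* Let $\mathcal H=\mathbb C^2$ with basis $I=\{|0\rangle,|1\rangle\}$ (the $\sigma_z$ eigenbasis), and let $\rho=\frac12(\mathbb 1+n_x\sigma_x+n_y\sigma_y+n_z\sigma_z)$ be any qubit density matrix ($n_x^2+n_y^2+n_z^2\le1$). Define $C_z(\rho)=\sqrt{n_x^2+n_y^2}$. Then $$R_I(\rho)=h\!\left(\frac{1+\sqrt{1-C_z(\rho)^2}}{2}\right),$$ where $h(p)=-p\log_2p-(1-p)\log_2(1-p)$ is the binary entropy. Moreover $C_z(\rho)=|\sqrt{\eta_1}-\sqrt{\eta_2}|$, where $\eta_1,\eta_2$ are the eigenvalues of $\rho\,\sigma_x\rho^*\sigma_x$ ($\rho^*$ the entrywise complex conjugate in basis $I$), and $C_z(\rho)=C_{l_1}(\rho):=|\langle0|\rho|1\rangle|+|\langle1|\rho|0\rangle|$.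
   Context: $\sigma_x,\sigma_y,\sigma_z$ are the Pauli matrices. For a density matrix $\rho$, let $\rho^{\mathrm{diag}}=\sum_i\langle i|\rho|i\rangle\,|i\rangle\langle i|$. For a pure state $|\psi\rangle=\sum_ia_i|i\rangle$ define $R_I(|\psi\rangle)=S\big((|\psi\rangle\langle\psi|)^{\mathrm{diag}}\big)=-\sum_i|a_i|^2\log_2|a_i|^2$, where $S$ is the von Neumann entropy. For a general density matrix $\rho$ define $R_I(\rho)=\min\sum_ep_eR_I(|\psi_e\rangle)$, the minimum over all finite pure-state decompositions $\rho=\sum_ep_e|\psi_e\rangle\langle\psi_e|$ with $p_e>0$, $\sum_ep_e=1$. *)

theory Defs
  imports "Jordan_Normal_Form.Char_Poly"
begin

definition sigma_x :: "complex mat" where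
  "sigma_x = mat_of_rows_list 2 [[0, 1], [1, 0]]"
definition sigma_y :: "complex mat" where
  "sigma_y = mat_of_rows_list 2 [[0, -\<i>], [\<i>, 0]]"
definition sigma_z :: "complex mat" where
  "sigma_z = mat_of_rows_list 2 [[1, 0], [0, -1]]"

definition bloch_state :: "real \<Rightarrow> real \<Rightarrow> real \<Rightarrow> complex mat" where
  "bloch_state nx ny nz =
     (1/2 :: complex) \<cdot>\<^sub>m (1\<^sub>m 2 + complex_of_real nx \<cdot>\<^sub>m sigma_x
        + complex_of_real ny \<cdot>\<^sub>m sigma_y + complex_of_real nz \<cdot>\<^sub>m sigma_z)"

definition ent_term :: "real \<Rightarrow> real" where
  "ent_term t = (if t = 0 then 0 else - t * log 2 t)"

definition bin_entropy :: "real \<Rightarrow> real" where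
  "bin_entropy p = ent_term p + ent_term (1 - p)"

text \<open>R_I of a pure state |psi> = sum_i a_i |i> (in dimension n):
  von Neumann entropy of the dephased state = - sum_i |a_i|^2 log2 |a_i|^2.\<close>
definition RI_pure :: "nat \<Rightarrow> complex vec \<Rightarrow> real" where
  "RI_pure n \<psi> = (\<Sum>i<n. ent_term ((cmod (\<psi> $ i))\<^sup>2))"

definition unit_state :: "nat \<Rightarrow> complex vec \<Rightarrow> bool" where
  "unit_state n \<psi> \<longleftrightarrow> \<psi> \<in> carrier_vec n \<and> (\<Sum>i<n. (cmod (\<psi> $ i))\<^sup>2) = 1"

definition pure_decomp :: "complex mat \<Rightarrow> nat \<Rightarrow> (nat \<Rightarrow> real) \<Rightarrow> (nat \<Rightarrow> complex vec) \<Rightarrow> bool" where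
  "pure_decomp \<rho> m p \<psi> \<longleftrightarrow>
     (\<forall>e<m. p e > 0 \<and> unit_state (dim_row \<rho>) (\<psi> e)) \<and> (\<Sum>e<m. p e) = 1 \<and>
     \<rho> = mat (dim_row \<rho>) (dim_row \<rho>)
            (\<lambda>(i, j). \<Sum>e<m. complex_of_real (p e) * \<psi> e $ i * cnj (\<psi> e $ j))"

definition RI :: "complex mat \<Rightarrow> real" where
  "RI \<rho> = Inf {(\<Sum>e<m. p e * RI_pure (dim_row \<rho>) (\<psi> e)) | m p \<psi>. pure_decomp \<rho> m p \<psi>}"

definition C_z :: "real \<Rightarrow> real \<Rightarrow> real" where
  "C_z nx ny = sqrt (nx\<^sup>2 + ny\<^sup>2)"

definition C_l1 :: "complex mat \<Rightarrow> real" where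
  "C_l1 \<rho> = cmod (\<rho> $$ (0, 1)) + cmod (\<rho> $$ (1, 0))"

end

theory Submission
  imports Defs "HOL-Real_Asymp.Real_Asymp"
begin

definition LL :: "real \<Rightarrow> real" where "LL t = t * ln t"

lemma LL_cont: "continuous_on {0..} LL"
proof -
  have "\<And>x. x \<in> {0..} \<Longrightarrow> continuous (at x within {0..}) LL"
  proof -
    fix x :: real assume x: "x \<in> {0..}"
    show "continuous (at x within {0..}) LL"
    proof (cases "x = 0")
      case True
      have "(LL \<longlongrightarrow> 0) (at_right 0)" unfolding LL_def by real_asymp
      thus ?thesis using True by (simp add: continuous_within at_within_Ici_at_right LL_def)
    next
      case False
      hence "isCont LL x" unfolding LL_def using x by (auto intro!: continuous_intros)
      thus ?thesis using continuous_at_imp_continuous_at_within by blast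
    qed
  qed
  thus ?thesis using continuous_on_eq_continuous_within by blast
qed

definition Ar :: "real \<Rightarrow> real" where "Ar s = (ln (1+s) - ln (1-s)) / 2"

lemma Ar_deriv: "-1 < s \<Longrightarrow> s < 1 \<Longrightarrow> (Ar has_real_derivative 1/(1-s^2)) (at s)"
  unfolding Ar_def
  by (rule derivative_eq_intros refl | simp)+ (simp add: field_simps power2_eq_square)

lemma Ar_ge: assumes "0 \<le> s" "s < 1" shows "s \<le> Ar s"
proof -
  have "(\<lambda>x. Ar x - x) 0 \<le> (\<lambda>x. Ar x - x) s"
  proof (rule DERIV_nonneg_imp_increasing_open[OF assms(1)])
    fix x assume x: "0 < x" "x < s"
    have "((\<lambda>x. Ar x - x) has_real_derivative 1/(1-x^2) - 1) (at x)"
      using x assms by (auto intro!: derivative_eq_intros Ar_deriv)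
    moreover have "1/(1-x^2) - 1 \<ge> 0"
    proof -
      have "x^2 < 1" using x assms by (simp add: abs_square_less_1)
      moreover have "x^2 \<ge> 0" by simp
      ultimately show ?thesis by (simp add: le_divide_eq)
    qed
    ultimately show "\<exists>y. ((\<lambda>x. Ar x - x) has_real_derivative y) (at x) \<and> 0 \<le> y" by blast
  next
    show "continuous_on {0..s} (\<lambda>x. Ar x - x)" unfolding Ar_def using assms
      by (auto intro!: continuous_intros)
  qed
  thus ?thesis by (simp add: Ar_def)
qed

definition K :: "real \<Rightarrow> real" where "K s = sqrt (1 - s^2)"
definition G :: "real \<Rightarrow> real" where "G s = - (LL ((1+s)/2) + LL ((1-s)/2)) / ln 2"
definition u :: "real \<Rightarrow> real" where "u s = K s * Ar s / s"

lemma K_pos: "-1 < s \<Longrightarrow> s < 1 \<Longrightarrow> K s > 0"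
  unfolding K_def by (simp add: abs_square_less_1)
lemma K_sq: "-1 \<le> s \<Longrightarrow> s \<le> 1 \<Longrightarrow> K s * K s = 1 - s^2"
  unfolding K_def by (simp add: abs_square_le_1)

lemma K_deriv: assumes "-1 < s" "s < 1" shows "(K has_real_derivative - s / K s) (at s)"
proof -
  have p: "0 < 1 - s^2" using assms by (simp add: abs_square_less_1)
  have i: "((\<lambda>x. 1 - x^2) has_real_derivative -(2*s)) (at s)"
    by (auto intro!: derivative_eq_intros)
  have "((\<lambda>x. sqrt (1 - x^2)) has_real_derivative inverse (sqrt (1 - s^2)) / 2 * -(2*s)) (at s)"
    by (rule DERIV_chain2[OF DERIV_real_sqrt[OF p] i])
  moreover have "inverse (sqrt (1 - s^2)) / 2 * -(2*s) = - s / K s" unfolding K_def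
    by (simp add: field_simps)
  ultimately show ?thesis unfolding K_def by simp
qed

lemma LL_deriv: "0 < t \<Longrightarrow> (LL has_real_derivative ln t + 1) (at t)"
  unfolding LL_def by (rule derivative_eq_intros refl | simp)+

lemma G_deriv: assumes "-1 < s" "s < 1" shows "(G has_real_derivative - Ar s / ln 2) (at s)"
proof -
  have a: "0 < (1+s)/2" "0 < (1-s)/2" using assms by auto
  have i1: "((\<lambda>x. (1+x)/2) has_real_derivative 1/2) (at s)" by (auto intro!: derivative_eq_intros)
  have i2: "((\<lambda>x. (1-x)/2) has_real_derivative -1/2) (at s)" by (auto intro!: derivative_eq_intros)
  have d1: "((\<lambda>x. LL ((1+x)/2)) has_real_derivative (ln ((1+s)/2) + 1) * (1/2)) (at s)"
    by (rule DERIV_chain2[OF LL_deriv[OF a(1)] i1])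
  have d2: "((\<lambda>x. LL ((1-x)/2)) has_real_derivative (ln ((1-s)/2) + 1) * (-1/2)) (at s)"
    by (rule DERIV_chain2[OF LL_deriv[OF a(2)] i2])
  have "(G has_real_derivative - ((ln ((1+s)/2) + 1) * (1/2) + (ln ((1-s)/2) + 1) * (-1/2)) / ln 2) (at s)"
    unfolding G_def by (intro DERIV_cdivide DERIV_minus DERIV_add d1 d2)
  moreover have "- ((ln ((1+s)/2) + 1) * (1/2) + (ln ((1-s)/2) + 1) * (-1/2)) / ln 2 = - Ar s / ln 2"
    unfolding Ar_def using a by (simp add: ln_div field_simps)
  ultimately show ?thesis by simp
qed

lemma u_deriv: assumes "0 < s" "s < 1"
  shows "(u has_real_derivative (s - Ar s) / (s^2 * K s)) (at s)"
proof -
  have Kp: "K s > 0" using assms by (intro K_pos) auto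
  have kk: "K s * K s = 1 - s^2" using assms by (intro K_sq) auto
  have d: "((\<lambda>x. K x * Ar x) has_real_derivative (- s / K s) * Ar s + 1/(1-s^2) * K s) (at s)"
    using assms by (intro DERIV_mult K_deriv Ar_deriv) auto
  have "(u has_real_derivative (((- s / K s) * Ar s + 1/(1-s^2) * K s) * s - K s * Ar s * 1) / (s*s)) (at s)"
    unfolding u_def[abs_def] using assms by (intro DERIV_divide d DERIV_ident) auto
  moreover have "(((- s / K s) * Ar s + 1/(1-s^2) * K s) * s - K s * Ar s * 1) / (s*s) = (s - Ar s) / (s^2 * K s)"
  proof -
    have ne: "1 - s^2 \<noteq> 0" using kk Kp by (metis mult_pos_pos not_less_iff_gr_or_eq)
    have e: "1/(1-s^2) * K s = 1 / K s" unfolding kk[symmetric] using Kp by (simp add: field_simps)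
    have "((- s / K s) * Ar s + 1/(1-s^2) * K s) * s - K s * Ar s * 1
        = (- s * s * Ar s + s - K s * K s * Ar s) / K s" unfolding e using Kp by (simp add: field_simps)
    also have "\<dots> = (s - Ar s) / K s" unfolding kk by (simp add: field_simps power2_eq_square)
    finally show ?thesis using assms Kp by (simp add: field_simps power2_eq_square)
  qed
  ultimately show ?thesis by simp
qed

lemma u_mono: assumes "0 < s1" "s1 \<le> s2" "s2 < 1" shows "u s2 \<le> u s1"
proof (rule DERIV_nonpos_imp_decreasing_open[OF assms(2)])
  fix x assume x: "s1 < x" "x < s2"
  have "(s - Ar s) / (s^2 * K s) \<le> 0" if "0 < s" "s < 1" for s
  proof -
    have "s - Ar s \<le> 0" using Ar_ge[of s] that by simp
    moreover have "s^2 * K s > 0" using that K_pos[of s] by simp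
    ultimately show ?thesis by (simp add: divide_nonpos_pos)
  qed
  thus "\<exists>y. (u has_real_derivative y) (at x) \<and> y \<le> 0"
    using u_deriv[of x] x assms by (meson less_le_trans le_less_trans less_trans)
next
  show "continuous_on {s1..s2} u"
    by (rule continuous_at_imp_continuous_on, rule ballI, rule DERIV_isCont[OF u_deriv])
       (use assms in auto)
qed

lemma G_cont: "continuous_on {-1..1} G"
proof -
  have "continuous_on {-1..1} (\<lambda>s. LL ((1+s)/2))"
    by (rule continuous_on_compose2[OF LL_cont]) (auto intro!: continuous_intros)
  moreover have "continuous_on {-1..1} (\<lambda>s. LL ((1-s)/2))"
    by (rule continuous_on_compose2[OF LL_cont]) (auto intro!: continuous_intros)
  ultimately show ?thesis unfolding G_def by (auto intro!: continuous_intros)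
qed

lemma K_cont: "continuous_on A K" unfolding K_def by (auto intro!: continuous_intros)

lemma tangent: assumes "0 < s0" "s0 < 1" "0 \<le> s" "s \<le> 1"
  shows "G s0 - u s0 / ln 2 * K s0 \<le> G s - u s0 / ln 2 * K s"
proof -
  define B where "B = u s0 / ln 2"
  define \<Phi> where "\<Phi> x = G x - B * K x" for x
  have dP: "(\<Phi> has_real_derivative (u s0 - u x) * x / (K x * ln 2)) (at x)" if "0 < x" "x < 1" for x
  proof -
    have Kp: "K x > 0" using that by (intro K_pos) auto
    have "(\<Phi> has_real_derivative - Ar x / ln 2 - B * (- x / K x)) (at x)"
      unfolding \<Phi>_def[abs_def] using that by (intro DERIV_diff DERIV_cmult G_deriv K_deriv) auto
    moreover have "Ar x = u x * x / K x" unfolding u_def using that Kp by (simp add: field_simps)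
    ultimately show ?thesis unfolding B_def using Kp by (simp add: field_simps)
  qed
  have cP: "continuous_on {a..b} \<Phi>" if "0 \<le> a" "b \<le> 1" for a b
  proof -
    have "continuous_on {a..b} G" using G_cont by (rule continuous_on_subset) (use that in auto)
    thus ?thesis unfolding \<Phi>_def[abs_def] using K_cont by (auto intro!: continuous_intros)
  qed
  have ln2: "ln (2::real) > 0" by simp
  show ?thesis
  proof (cases "s \<le> s0")
    case True
    have "\<Phi> s0 \<le> \<Phi> s"
    proof (rule DERIV_nonpos_imp_decreasing_open[OF True])
      fix x assume x: "s < x" "x < s0"
      have x01: "0 < x" "x < 1" using x assms by auto
      have "u s0 \<le> u x" using u_mono[of x s0] x01 x assms by auto
      hence "(u s0 - u x) * x / (K x * ln 2) \<le> 0" using x01 K_pos[of x] ln2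
        by (intro divide_nonpos_pos mult_nonpos_nonneg) auto
      thus "\<exists>y. (\<Phi> has_real_derivative y) (at x) \<and> y \<le> 0" using dP[OF x01] by blast
    qed (rule cP, use assms in auto)
    thus ?thesis unfolding \<Phi>_def B_def .
  next
    case False
    hence F: "s0 \<le> s" by simp
    have "\<Phi> s0 \<le> \<Phi> s"
    proof (rule DERIV_nonneg_imp_increasing_open[OF F])
      fix x assume x: "s0 < x" "x < s"
      have x01: "0 < x" "x < 1" using x assms by auto
      have "u x \<le> u s0" using u_mono[of s0 x] x01 x assms by auto
      hence "(u s0 - u x) * x / (K x * ln 2) \<ge> 0" using x01 K_pos[of x] ln2
        by (intro divide_nonneg_pos mult_nonneg_nonneg) auto
      thus "\<exists>y. (\<Phi> has_real_derivative y) (at x) \<and> y \<ge> 0" using dP[OF x01] by blast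
    qed (rule cP, use assms in auto)
    thus ?thesis unfolding \<Phi>_def B_def .
  qed
qed
lemma det1: assumes "(A::'a::comm_ring_1 mat) \<in> carrier_mat 1 1" shows "det A = A $$ (0,0)"
proof -
  have "det A = prod_list (diag_mat A)"
    by (rule det_upper_triangular[OF _ assms]) (use assms in \<open>auto simp: upper_triangular_def\<close>)
  thus ?thesis using assms by (simp add: diag_mat_def)
qed
lemma det2: assumes A: "(A::'a::comm_ring_1 mat) \<in> carrier_mat 2 2"
  shows "det A = A$$(0,0)*A$$(1,1) - A$$(0,1)*A$$(1,0)"
proof -
  have "det A = (\<Sum>i<2. A $$ (i,0) * cofactor A i 0)" by (rule laplace_expansion_column[OF A]) auto
  also have "\<dots> = A $$ (0,0) * cofactor A 0 0 + A $$ (1,0) * cofactor A 1 0"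
    by (simp add: numeral_2_eq_2)
  also have "cofactor A 0 0 = A$$(1,1)"
    unfolding cofactor_def using A by (subst det1) (auto simp: mat_delete_def)
  also have "cofactor A 1 0 = - A$$(0,1)"
    unfolding cofactor_def using A by (subst det1) (auto simp: mat_delete_def)
  finally show ?thesis by (simp add: algebra_simps)
qed

definition m2 :: "'a \<Rightarrow> 'a \<Rightarrow> 'a \<Rightarrow> 'a \<Rightarrow> 'a mat" where
  "m2 a b c d = mat 2 2 (\<lambda>(i,j). if i = 0 then (if j = 0 then a else b) else (if j = 0 then c else d))"

lemma m2_carrier[simp]: "m2 a b c d \<in> carrier_mat 2 2" and m2_dim[simp]: "dim_row (m2 a b c d) = 2" "dim_col (m2 a b c d) = 2"
  by (auto simp: m2_def)
lemma m2_idx[simp]: "m2 a b c d $$ (0,0) = a" "m2 a b c d $$ (0,1) = b" "m2 a b c d $$ (1,0) = c" "m2 a b c d $$ (1,1) = d"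
  "m2 a b c d $$ (0,Suc 0) = b" "m2 a b c d $$ (Suc 0,0) = c" "m2 a b c d $$ (Suc 0,Suc 0) = d"
  by (auto simp: m2_def)

lemma less2: "(i::nat) < 2 \<longleftrightarrow> i = 0 \<or> i = 1" by auto

lemma m2_eqI: assumes "A \<in> carrier_mat 2 2" "A $$ (0,0) = a" "A $$ (0,1) = b" "A $$ (1,0) = c" "A $$ (1,1) = d"
  shows "A = m2 a b c d"
  by (rule eq_matI) (use assms in \<open>auto simp: less2\<close>)

lemma m2_mult: "m2 (a::'a::comm_ring_1) b c d * m2 e f g h = m2 (a*e+b*g) (a*f+b*h) (c*e+d*g) (c*f+d*h)"
  by (rule m2_eqI) (auto simp: scalar_prod_def numeral_2_eq_2)

lemma m2_add: "m2 (a::'a::comm_ring_1) b c d + m2 e f g h = m2 (a+e) (b+f) (c+g) (d+h)"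
  by (rule m2_eqI) auto
lemma m2_smult: "(k::'a::comm_ring_1) \<cdot>\<^sub>m m2 a b c d = m2 (k*a) (k*b) (k*c) (k*d)"
  by (rule m2_eqI) auto
lemma m2_map: "map_mat f (m2 a b c d) = m2 (f a) (f b) (f c) (f d)"
  by (rule m2_eqI) auto
lemma m2_one: "(1\<^sub>m 2 :: 'a::comm_ring_1 mat) = m2 1 0 0 1"
  by (rule m2_eqI) auto
lemma m2_rows: "mat_of_rows_list 2 [[a,b],[c,d]] = m2 a b c d"
  by (rule m2_eqI) (auto simp: mat_of_rows_list_def)

lemma char_poly_m2: "char_poly (m2 (a::'a::comm_ring_1) b c d) = [:a*d - b*c, -(a+d), 1:]"
  unfolding char_poly_def char_poly_matrix_def
  by (subst det2) (auto simp: algebra_simps)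

lemma bloch_m2: "bloch_state nx ny nz = m2 ((1 + of_real nz)/2) ((of_real nx - of_real ny * \<i>) / 2) ((of_real nx + of_real ny * \<i>) / 2) ((1 - of_real nz)/2)"
  unfolding bloch_state_def sigma_x_def sigma_y_def sigma_z_def m2_rows m2_one m2_smult m2_add
  by (auto simp: complex_eq_iff)

lemma sigx_m2: "sigma_x = m2 0 1 1 0" unfolding sigma_x_def m2_rows ..

lemma poly_prod2: "[:- x, 1:] * [:- y, 1:] = [: x*y, -(x+y), (1::'a::comm_ring_1) :]"
  by (simp add: algebra_simps)

lemma cnj_m2_prod:
  fixes \<alpha> \<delta> :: real and w :: complex
  shows "char_poly (m2 (of_real \<alpha>) w (cnj w) (of_real \<delta>) * m2 0 1 1 0 * map_mat cnj (m2 (of_real \<alpha>) w (cnj w) (of_real \<delta>)) * m2 0 1 1 0)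
     = [: of_real ((\<alpha>*\<delta> - (cmod w)^2)^2), - of_real (2*(\<alpha>*\<delta> + (cmod w)^2)), 1 :]"
proof -
  have k: "w * cnj w = of_real ((cmod w)^2)" by (metis complex_norm_square)
  have k': "cnj w * w = of_real ((cmod w)^2)" by (metis complex_norm_square mult.commute)
  show ?thesis
    unfolding m2_map m2_mult char_poly_m2
    by (simp add: k k' algebra_simps power2_eq_square)
qed

lemma second_part:
  fixes nx ny nz :: real
  assumes h: "nx\<^sup>2 + ny\<^sup>2 + nz\<^sup>2 \<le> 1"
  and cp: "char_poly (bloch_state nx ny nz * sigma_x * map_mat cnj (bloch_state nx ny nz) * sigma_x)
                 = [:- \<eta>1, 1:] * [:- \<eta>2, 1:]"
  shows "\<eta>1 \<in> \<real> \<and> \<eta>2 \<in> \<real> \<and> Re \<eta>1 \<ge> 0 \<and> Re \<eta>2 \<ge> 0 \<and>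
          C_z nx ny = \<bar>sqrt (Re \<eta>1) - sqrt (Re \<eta>2)\<bar>"
proof -
  define c where "c = sqrt (nx^2+ny^2)"
  define r where "r = sqrt (1 - nz^2)"
  have nn: "0 \<le> nx^2+ny^2" by simp
  have c0: "c \<ge> 0" unfolding c_def using nn by simp
  have c2: "c^2 = nx^2+ny^2" unfolding c_def using nn by simp
  have nz1: "nz^2 \<le> 1" using h nn by linarith
  have r0: "r \<ge> 0" unfolding r_def using nz1 by simp
  have r2: "r^2 = 1 - nz^2" unfolding r_def using nz1 by simp
  have cr: "c \<le> r" unfolding c_def r_def using h by (intro real_sqrt_le_mono) simp
  define w where "w = (of_real nx - of_real ny * \<i>) / (2::complex)"
  have cw: "(cmod w)^2 = c^2/4" unfolding w_def c2
    by (simp add: norm_divide power_divide cmod_def power2_eq_square)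
  have cnjw: "cnj w = (of_real nx + of_real ny * \<i>) / 2" unfolding w_def by (simp add: complex_eq_iff)
  have bl: "bloch_state nx ny nz = m2 (of_real ((1+nz)/2)) w (cnj w) (of_real ((1-nz)/2))"
    unfolding bloch_m2 cnjw w_def by simp
  define a where "a = ((r+c)/2)^2"
  define b where "b = ((r-c)/2)^2"
  have r2': "r*r = 1 - nz*nz" using r2 by (simp add: power2_eq_square)
  have "a + b = (r^2 + c^2)/2" unfolding a_def b_def by (simp add: power2_eq_square field_simps)
  also have "\<dots> = 2*((1+nz)/2*((1-nz)/2) + (cmod w)^2)" unfolding cw r2 by (simp add: field_simps power2_eq_square)
  finally have ab1: "a + b = 2*((1+nz)/2*((1-nz)/2) + (cmod w)^2)" .
  have "a * b = ((r^2 - c^2)/4)^2" unfolding a_def b_def by (simp add: power2_eq_square field_simps)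
  also have "\<dots> = ((1+nz)/2*((1-nz)/2) - (cmod w)^2)^2" unfolding cw r2 by (simp add: field_simps power2_eq_square)
  finally have ab2: "a * b = ((1+nz)/2*((1-nz)/2) - (cmod w)^2)^2" .
  from cp[unfolded bl sigx_m2 cnj_m2_prod poly_prod2]
  have e1': "- of_real (a + b) = - (\<eta>1 + \<eta>2)" and e2: "\<eta>1 * \<eta>2 = of_real (a*b)"
    unfolding ab1 ab2 by auto
  from e1' have e1: "\<eta>1 + \<eta>2 = of_real (a + b)" by (metis minus_equation_iff)
  have "(\<eta>1 - of_real a) * (\<eta>1 - of_real b) = \<eta>1 * \<eta>1 - (\<eta>1 + \<eta>2) * \<eta>1 + \<eta>1 * \<eta>2"
    using e1 e2 by (simp add: algebra_simps)
  also have "\<dots> = 0" by (simp add: algebra_simps)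
  finally have "\<eta>1 = of_real a \<or> \<eta>1 = of_real b" by simp
  hence "\<eta>1 = of_real a \<and> \<eta>2 = of_real b \<or> \<eta>1 = of_real b \<and> \<eta>2 = of_real a"
    using e1 by auto
  moreover have sa: "sqrt a = (r+c)/2" "sqrt b = (r - c)/2" unfolding a_def b_def using c0 r0 cr by auto
  moreover have "C_z nx ny = c" unfolding C_z_def c_def ..
  moreover have "a \<ge> 0" "b \<ge> 0" unfolding a_def b_def by simp_all
  moreover have "\<bar>sqrt a - sqrt b\<bar> = c" "\<bar>sqrt b - sqrt a\<bar> = c"
  proof -
    have d1: "(r+c)/2 - (r-c)/2 = c" by (simp add: field_simps)
    have d2: "(r-c)/2 - (r+c)/2 = -c" by (simp add: field_simps)
    note d = d1 d2
    show "\<bar>sqrt a - sqrt b\<bar> = c" "\<bar>sqrt b - sqrt a\<bar> = c" unfolding sa d using c0 by simp_all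
  qed
  ultimately show ?thesis by auto
qed
lemma ent_LL: "ent_term t = - LL t / ln 2" unfolding ent_term_def LL_def log_def by auto

lemma bin_sym: "bin_entropy (1 - q) = bin_entropy q" unfolding bin_entropy_def by simp

lemma bin_G: assumes "0 \<le> q" "q \<le> 1" shows "bin_entropy q = G \<bar>2*q-1\<bar>"
proof (cases "q \<ge> 1/2")
  case True
  hence a: "(1 + \<bar>2*q-1\<bar>)/2 = q" "(1 - \<bar>2*q-1\<bar>)/2 = 1 - q" by simp_all
  show ?thesis unfolding bin_entropy_def ent_LL G_def a by (simp add: field_simps)
next
  case False
  hence a: "(1 + \<bar>2*q-1\<bar>)/2 = 1 - q" "(1 - \<bar>2*q-1\<bar>)/2 = q" by simp_all
  show ?thesis unfolding bin_entropy_def ent_LL G_def a by (simp add: field_simps)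
qed

lemma K_q: assumes "0 \<le> q" "q \<le> 1" shows "K \<bar>2*q-1\<bar> = 2*sqrt(q*(1-q))"
proof -
  have "1 - \<bar>2*q-1\<bar>^2 = 4 * (q*(1-q))" by (simp add: power2_eq_square algebra_simps)
  hence "K \<bar>2*q-1\<bar> = sqrt 4 * sqrt (q*(1-q))" unfolding K_def by (simp add: real_sqrt_mult)
  also have "sqrt 4 = (2::real)" by (simp add: real_sqrt_eq_iff[symmetric] power2_eq_square[symmetric])
  finally show ?thesis .
qed

lemma ent_nonneg: "0 \<le> t \<Longrightarrow> t \<le> 1 \<Longrightarrow> 0 \<le> ent_term t"
  unfolding ent_term_def by (auto simp: mult_nonneg_nonpos)

lemma bin_nonneg: "0 \<le> q \<Longrightarrow> q \<le> 1 \<Longrightarrow> 0 \<le> bin_entropy q"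
  unfolding bin_entropy_def using ent_nonneg[of q] ent_nonneg[of "1-q"] by simp

lemma tangent_q: assumes "0 < s0" "s0 < 1" "0 \<le> q" "q \<le> 1"
  shows "G s0 - u s0 / ln 2 * K s0 \<le> bin_entropy q - u s0 / ln 2 * (2*sqrt(q*(1-q)))"
  using tangent[OF assms(1,2), of "\<bar>2*q-1\<bar>"] assms bin_G[OF assms(3,4)] K_q[OF assms(3,4)] by simp

lemma B_nonneg: assumes "0 < s0" "s0 < 1" shows "0 \<le> u s0 / ln 2"
proof -
  have "K s0 > 0" using assms by (intro K_pos) auto
  moreover have "Ar s0 \<ge> s0" using Ar_ge assms by auto
  ultimately show ?thesis unfolding u_def using assms by simp
qed

lemma sum2: "(\<Sum>i<2. f i) = f 0 + f (1::nat)" by (simp add: numeral_2_eq_2)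

lemma RI_pure2: assumes "unit_state 2 \<psi>"
  shows "RI_pure 2 \<psi> = bin_entropy ((cmod (\<psi>$0))\<^sup>2)" "(cmod (\<psi>$1))\<^sup>2 = 1 - (cmod (\<psi>$0))\<^sup>2"
proof -
  show e: "(cmod (\<psi>$1))\<^sup>2 = 1 - (cmod (\<psi>$0))\<^sup>2" using assms unfolding unit_state_def sum2 by simp
  show "RI_pure 2 \<psi> = bin_entropy ((cmod (\<psi>$0))\<^sup>2)"
    unfolding RI_pure_def sum2 bin_entropy_def e ..
qed

lemma dim_bloch: "dim_row (bloch_state nx ny nz) = 2" unfolding bloch_m2 by simp

lemma cmod_w: "cmod (complex_of_real x + complex_of_real y * \<i>) = sqrt (x^2+y^2)" by (simp add: cmod_def)
lemma cmod_w': "cmod (complex_of_real x - complex_of_real y * \<i>) = sqrt (x^2+y^2)" by (simp add: cmod_def)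

lemma K_le1: "K s \<le> 1" unfolding K_def by simp
lemma K_ge0: "-1 \<le> s \<Longrightarrow> s \<le> 1 \<Longrightarrow> 0 \<le> K s" unfolding K_def by (simp add: abs_square_le_1)

lemma lower:
  assumes h: "nx^2+ny^2+nz^2 \<le> 1" and pd: "pure_decomp (bloch_state nx ny nz) m p \<psi>"
  shows "bin_entropy ((1 + sqrt (1 - (C_z nx ny)^2))/2) \<le> (\<Sum>e<m. p e * RI_pure 2 (\<psi> e))"
proof -
  define \<rho> where "\<rho> = bloch_state nx ny nz"
  define c where "c = C_z nx ny"
  have dr: "dim_row \<rho> = 2" unfolding \<rho>_def by (rule dim_bloch)
  have pos: "\<And>e. e<m \<Longrightarrow> p e > 0" and us: "\<And>e. e<m \<Longrightarrow> unit_state 2 (\<psi> e)" and ps: "(\<Sum>e<m. p e) = 1"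
    and eq: "\<rho> = mat 2 2 (\<lambda>(i,j). \<Sum>e<m. complex_of_real (p e) * \<psi> e $ i * cnj (\<psi> e $ j))"
    using pd unfolding pure_decomp_def \<rho>_def[symmetric] dr by auto
  define q where "q e = (cmod (\<psi> e $ 0))^2" for e
  define Ce where "Ce e = 2 * sqrt (q e * (1 - q e))" for e
  have q1: "\<And>e. e<m \<Longrightarrow> (cmod (\<psi> e $ 1))^2 = 1 - q e" using RI_pure2(2)[OF us] unfolding q_def by auto
  have q01: "\<And>e. e<m \<Longrightarrow> 0 \<le> q e \<and> q e \<le> 1"
  proof -
    fix e assume e: "e<m"
    have "0 \<le> q e" unfolding q_def by simp
    moreover have "q e \<le> 1" using q1[OF e] zero_le_power2[of "cmod (\<psi> e $ 1)"] by linarith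
    ultimately show "0 \<le> q e \<and> q e \<le> 1" by simp
  qed
  have CeK: "\<And>e. e<m \<Longrightarrow> Ce e = K \<bar>2*q e-1\<bar>" unfolding Ce_def using K_q q01 by auto
  have RIe: "\<And>e. e<m \<Longrightarrow> RI_pure 2 (\<psi> e) = bin_entropy (q e)" using RI_pure2(1)[OF us] unfolding q_def by auto
  have S: "(\<Sum>e<m. p e * RI_pure 2 (\<psi> e)) = (\<Sum>e<m. p e * bin_entropy (q e))"
    using RIe by (intro sum.cong) auto
  have off: "\<rho> $$ (0,1) = (\<Sum>e<m. complex_of_real (p e) * \<psi> e $ 0 * cnj (\<psi> e $ 1))"
    by (subst eq) simp
  have "c/2 = cmod (\<rho> $$ (0,1))" unfolding \<rho>_def bloch_m2 c_def C_z_def by (simp add: norm_divide cmod_w')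
  also have "cmod (\<rho> $$ (0,1)) \<le> (\<Sum>e<m. cmod (complex_of_real (p e) * \<psi> e $ 0 * cnj (\<psi> e $ 1)))"
    unfolding off by (rule norm_sum)
  also have "\<dots> = (\<Sum>e<m. p e * Ce e / 2)"
  proof (rule sum.cong[OF refl])
    fix e assume "e \<in> {..<m}" hence e: "e<m" by simp
    have a: "cmod (\<psi> e $ 0) = sqrt (q e)" unfolding q_def by simp
    have b: "cmod (\<psi> e $ 1) = sqrt (1 - q e)" by (simp add: q1[OF e, symmetric])
    show "cmod (complex_of_real (p e) * \<psi> e $ 0 * cnj (\<psi> e $ 1)) = p e * Ce e / 2"
      using pos[OF e] unfolding Ce_def norm_mult complex_mod_cnj a b by (simp add: real_sqrt_mult)
  qed
  also have "\<dots> = (\<Sum>e<m. p e * Ce e) / 2" by (simp add: sum_divide_distrib)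
  finally have cle: "c \<le> (\<Sum>e<m. p e * Ce e)" by simp
  have c2: "c^2 = nx^2 + ny^2" unfolding c_def C_z_def by simp
  have c0: "0 \<le> c" unfolding c_def C_z_def by simp
  have c1: "c \<le> 1" unfolding c_def C_z_def using h by (simp add: real_sqrt_le_1_iff) (smt (verit) zero_le_power2)
  define s0 where "s0 = sqrt (1 - c^2)"
  have goal: "bin_entropy ((1 + s0)/2) \<le> (\<Sum>e<m. p e * bin_entropy (q e))"
  proof -
    consider "c = 0" | "c = 1" | "0 < c \<and> c < 1" using c0 c1 by fastforce
    thus ?thesis
    proof cases
      case 1
      hence "s0 = 1" unfolding s0_def by simp
      hence "bin_entropy ((1 + s0)/2) = 0" unfolding bin_entropy_def ent_term_def by simp
      moreover have "0 \<le> (\<Sum>e<m. p e * bin_entropy (q e))"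
        using pos q01 bin_nonneg by (intro sum_nonneg mult_nonneg_nonneg) (auto simp: less_imp_le)
      ultimately show ?thesis by simp
    next
      case 2
      hence s: "s0 = 0" unfolding s0_def by simp
      have t0: "\<And>e. e \<in> {..<m} \<Longrightarrow> 0 \<le> p e * (1 - Ce e)"
        using pos CeK K_le1 by (auto intro!: mult_nonneg_nonneg simp: less_imp_le)
      have "(\<Sum>e<m. p e * (1 - Ce e)) = (\<Sum>e<m. p e) - (\<Sum>e<m. p e * Ce e)"
        by (simp add: sum_subtractf right_diff_distrib)
      also have "\<dots> \<le> 0" using ps cle 2 by simp
      moreover have "0 \<le> (\<Sum>e<m. p e * (1 - Ce e))" by (rule sum_nonneg) (use t0 in auto)
      ultimately have Z: "(\<Sum>e<m. p e * (1 - Ce e)) = 0" by linarith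
      have z: "\<forall>e\<in>{..<m}. p e * (1 - Ce e) = 0" using Z sum_nonneg_eq_0_iff[OF finite_lessThan t0] by simp
      have qh: "q e = 1/2" if e: "e < m" for e
      proof -
        have "p e * (1 - Ce e) = 0" using z e by simp
        hence "Ce e = 1" using pos[OF e] by simp
        hence "sqrt (1 - (2*q e - 1)^2) = 1" using CeK[OF e] unfolding K_def by simp
        hence "(2*q e - 1)^2 = 0" by simp
        thus ?thesis by simp
      qed
      have "(\<Sum>e<m. p e * bin_entropy (q e)) = (\<Sum>e<m. p e * bin_entropy (1/2))"
        by (rule sum.cong[OF refl]) (simp add: qh)
      also have "\<dots> = bin_entropy (1/2)" using ps by (simp add: sum_distrib_right[symmetric])
      finally show ?thesis using s by simp
    next
      case 3
      have s0sq: "s0^2 = 1 - c^2" unfolding s0_def using c1 c0 by (simp add: power_le_one)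
      have s0p: "0 < s0" unfolding s0_def using 3 by (simp add: power_less_one_iff abs_square_less_1)
      have s01: "s0 < 1" unfolding s0_def using 3 by simp
      have Ks: "K s0 = c" unfolding K_def s0sq using c0 by simp
      have "bin_entropy ((1 + s0)/2) = G \<bar>2*((1+s0)/2)-1\<bar>" by (rule bin_G) (use s0p s01 in auto)
      also have "\<bar>2*((1+s0)/2)-1\<bar> = s0" using s0p by (simp add: field_simps)
      finally have Gs: "G s0 = bin_entropy ((1 + s0)/2)" by simp
      define B where "B = u s0 / ln 2"
      have B0: "0 \<le> B" unfolding B_def using B_nonneg s0p s01 by simp
      have "G s0 - B * c = (\<Sum>e<m. p e * (G s0 - B * c))" using ps by (simp add: sum_distrib_right[symmetric])
      also have "\<dots> \<le> (\<Sum>e<m. p e * (bin_entropy (q e) - B * Ce e))"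
      proof (rule sum_mono)
        fix e assume "e \<in> {..<m}" hence e: "e < m" by simp
        show "p e * (G s0 - B * c) \<le> p e * (bin_entropy (q e) - B * Ce e)"
          using tangent_q[OF s0p s01, of "q e"] q01[OF e] pos[OF e] unfolding B_def Ks Ce_def
          by (intro mult_left_mono) auto
      qed
      also have "\<dots> = (\<Sum>e<m. p e * bin_entropy (q e)) - B * (\<Sum>e<m. p e * Ce e)"
        by (simp add: sum_subtractf right_diff_distrib sum_distrib_left algebra_simps)
      finally have "G s0 - B * c \<le> (\<Sum>e<m. p e * bin_entropy (q e)) - B * (\<Sum>e<m. p e * Ce e)" .
      moreover have "B * c \<le> B * (\<Sum>e<m. p e * Ce e)" using cle B0 by (rule mult_left_mono)
      ultimately show ?thesis using Gs by linarith
    qed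
  qed
  show ?thesis using goal S unfolding s0_def c_def by simp
qed

definition st :: "real \<Rightarrow> complex \<Rightarrow> complex vec" where
  "st z ph = vec 2 (\<lambda>i. if i = 0 then complex_of_real (sqrt ((1+z)/2)) else complex_of_real (sqrt ((1-z)/2)) * ph)"

lemma st_facts: assumes z: "\<bar>z\<bar> \<le> 1" and ph: "cmod ph = 1"
  shows "unit_state 2 (st z ph)" "RI_pure 2 (st z ph) = bin_entropy ((1+z)/2)"
    "st z ph $ 0 * cnj (st z ph $ 0) = complex_of_real ((1+z)/2)"
    "st z ph $ 1 * cnj (st z ph $ 1) = complex_of_real ((1-z)/2)"
    "st z ph $ 0 * cnj (st z ph $ 1) = complex_of_real (sqrt (1 - z^2) / 2) * cnj ph"
    "st z ph $ 1 * cnj (st z ph $ 0) = complex_of_real (sqrt (1 - z^2) / 2) * ph"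
proof -
  have a0: "0 \<le> (1+z)/2" "0 \<le> (1-z)/2" using z by auto
  have v0: "st z ph $ 0 = complex_of_real (sqrt ((1+z)/2))" unfolding st_def by simp
  have v1: "st z ph $ 1 = complex_of_real (sqrt ((1-z)/2)) * ph" unfolding st_def by simp
  have pp: "ph * cnj ph = 1" using ph by (metis complex_norm_square mult.right_neutral of_real_1 power_one)
  have n0: "(cmod (st z ph $ 0))^2 = (1+z)/2" unfolding v0 using a0 by simp
  have n1: "(cmod (st z ph $ 1))^2 = (1-z)/2" unfolding v1 norm_mult ph using a0 by simp
  have cr: "sqrt ((1+z)/2) * sqrt ((1-z)/2) = sqrt (1 - z^2) / 2"
  proof -
    have "sqrt ((1+z)/2) * sqrt ((1-z)/2) = sqrt ((1 - z^2)/4)"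
      by (simp add: real_sqrt_mult[symmetric] power2_eq_square field_simps)
    also have "\<dots> = sqrt (1 - z^2) / 2" by (simp add: real_sqrt_divide)
    finally show ?thesis .
  qed
  show us: "unit_state 2 (st z ph)" unfolding unit_state_def sum2 n0 n1
    by (simp add: st_def field_simps)
  show "RI_pure 2 (st z ph) = bin_entropy ((1+z)/2)" using RI_pure2(1)[OF us] n0 by simp
  show "st z ph $ 0 * cnj (st z ph $ 0) = complex_of_real ((1+z)/2)"
    unfolding v0 using a0 by (simp flip: of_real_mult)
  show "st z ph $ 1 * cnj (st z ph $ 1) = complex_of_real ((1-z)/2)"
  proof -
    have "st z ph $ 1 * cnj (st z ph $ 1) = complex_of_real (sqrt ((1-z)/2) * sqrt ((1-z)/2)) * (ph * cnj ph)"
      unfolding v1 complex_cnj_mult complex_cnj_complex_of_real of_real_mult by (simp only: mult_ac)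
    thus ?thesis unfolding pp using a0 by simp
  qed
  show "st z ph $ 0 * cnj (st z ph $ 1) = complex_of_real (sqrt (1 - z^2) / 2) * cnj ph"
    unfolding v0 v1 cr[symmetric] by (simp add: algebra_simps)
  show "st z ph $ 1 * cnj (st z ph $ 0) = complex_of_real (sqrt (1 - z^2) / 2) * ph"
    unfolding v0 v1 cr[symmetric] by (simp add: algebra_simps)
qed

lemma sum1: "(\<Sum>e<(1::nat). f e) = f 0" by simp

lemma decomp_mat: "mat 2 2 (\<lambda>(i,j). \<Sum>e<m. complex_of_real (p e) * \<psi> e $ i * cnj (\<psi> e $ j))
  = m2 (\<Sum>e<m. complex_of_real (p e) * (\<psi> e $ 0 * cnj (\<psi> e $ 0)))
       (\<Sum>e<m. complex_of_real (p e) * (\<psi> e $ 0 * cnj (\<psi> e $ 1)))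
       (\<Sum>e<m. complex_of_real (p e) * (\<psi> e $ 1 * cnj (\<psi> e $ 0)))
       (\<Sum>e<m. complex_of_real (p e) * (\<psi> e $ 1 * cnj (\<psi> e $ 1)))"
  by (rule m2_eqI) (auto simp: mult.assoc)

lemma upper: assumes h: "nx^2+ny^2+nz^2 \<le> 1"
  shows "\<exists>m p \<psi>. pure_decomp (bloch_state nx ny nz) m p \<psi> \<and>
     (\<Sum>e<m. p e * RI_pure 2 (\<psi> e)) = bin_entropy ((1 + sqrt (1 - (C_z nx ny)^2))/2)"
proof -
  define c where "c = C_z nx ny"
  define s0 where "s0 = sqrt (1 - c^2)"
  define w where "w = complex_of_real nx + complex_of_real ny * \<i>"
  define ph where "ph = (if c = 0 then 1 else w / complex_of_real c)"
  have cw: "cmod w = c" unfolding w_def c_def C_z_def by (simp add: cmod_w)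
  have c2: "c^2 = nx^2 + ny^2" unfolding c_def C_z_def by simp
  have c0: "0 \<le> c" unfolding c_def C_z_def by simp
  have c1: "c \<le> 1" unfolding c_def C_z_def using h by (simp add: real_sqrt_le_1_iff) (smt (verit) zero_le_power2)
  have ph1: "cmod ph = 1" unfolding ph_def using cw by (auto simp: norm_divide)
  have cph: "complex_of_real c * ph = w"
  proof (cases "c = 0")
    case True thus ?thesis using cw by (simp add: ph_def)
  next
    case False thus ?thesis by (simp add: ph_def)
  qed
  have ccph: "complex_of_real c * cnj ph = cnj w" using arg_cong[OF cph, of cnj] by simp
  have s0sq: "s0^2 = 1 - c^2" unfolding s0_def using c1 c0 by (simp add: power_le_one)
  have s00: "0 \<le> s0" "s0 \<le> 1" unfolding s0_def using c0 c1 by (auto simp: power_le_one)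
  have nzs: "\<bar>nz\<bar> \<le> s0"
  proof -
    have "nz^2 \<le> 1 - c^2" using h c2 by simp
    hence "sqrt (nz^2) \<le> s0" unfolding s0_def by (rule real_sqrt_le_mono)
    thus ?thesis by simp
  qed
  have key: "sqrt (1 - z^2) = c" if "z^2 = s0^2" for z using that s0sq c0 by simp
  have cnjw: "cnj w = complex_of_real nx - complex_of_real ny * \<i>" unfolding w_def by (simp add: complex_eq_iff)
  have bl: "bloch_state nx ny nz = m2 ((1 + complex_of_real nz)/2) (cnj w/2) (w/2) ((1 - complex_of_real nz)/2)"
    unfolding bloch_m2 cnjw by (simp add: w_def)
  define V where "V = bin_entropy ((1 + s0)/2)"
  have Vm: "bin_entropy ((1 - s0)/2) = V" unfolding V_def using bin_sym[of "(1+s0)/2"] by (simp add: field_simps)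
  have goalV: "bin_entropy ((1 + sqrt (1 - (C_z nx ny)^2))/2) = V" unfolding V_def s0_def c_def ..
  have fz: "\<bar>z\<bar> \<le> 1" if "\<bar>z\<bar> = s0" for z using that s00 by simp
  show ?thesis
  proof (cases "\<bar>nz\<bar> = s0")
    case True
    have nzsq: "nz^2 = s0^2" using True by (metis power2_abs)
    have F: "\<And>i j. st nz ph $ i * cnj (st nz ph $ j) = st nz ph $ i * cnj (st nz ph $ j)" by simp
    note sf = st_facts[OF fz[OF True] ph1] st_facts[OF fz[OF True] ph1, unfolded One_nat_def]
    have pd: "pure_decomp (bloch_state nx ny nz) 1 (\<lambda>_. 1) (\<lambda>_. st nz ph)"
      unfolding pure_decomp_def dim_bloch decomp_mat
      using sf(1) by (simp add: sf key[OF nzsq] bl cph ccph)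
    moreover have "(\<Sum>e<(1::nat). 1 * RI_pure 2 (st nz ph)) = V"
    proof -
      have "(\<Sum>e<(1::nat). 1 * RI_pure 2 (st nz ph)) = RI_pure 2 (st nz ph)" unfolding sum1 by simp
      also have "\<dots> = V" using sf(2) True Vm by (cases "nz \<ge> 0") (auto simp: V_def)
      finally show ?thesis .
    qed
    ultimately show ?thesis unfolding goalV
      by (intro exI[of _ "1::nat"] exI[of _ "\<lambda>_. 1::real"] exI[of _ "\<lambda>_. st nz ph"] conjI)
  next
    case False
    hence lt: "\<bar>nz\<bar> < s0" using nzs by simp
    hence sp: "s0 > 0" by simp
    define p where "p e = (if e = 0 then (1 + nz/s0)/2 else (1 - nz/s0)/2)" for e :: nat
    define \<psi> where "\<psi> e = (if e = 0 then st s0 ph else st (-s0) ph)" for e :: nat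
    have r1: "nz/s0 < 1" using lt sp by (simp add: divide_less_eq)
    have r2: "-1 < nz/s0" using lt sp by (simp add: less_divide_eq)
    have ppos: "p 0 > 0" "p 1 > 0" unfolding p_def using r1 r2 by simp_all
    have as0: "\<bar>s0\<bar> = s0" "\<bar>-s0\<bar> = s0" using s00 by simp_all
    note sf1 = st_facts[OF fz[OF as0(1)] ph1] and sf2 = st_facts[OF fz[OF as0(2)] ph1]
    note sf1' = sf1[unfolded One_nat_def] and sf2' = sf2[unfolded One_nat_def]
    have k1: "sqrt (1 - s0^2) = c" and k2: "sqrt (1 - (-s0)^2) = c" using key by auto
    have psum: "p 0 + p 1 = 1" unfolding p_def by (simp add: field_simps)
    have e00': "p 0 * ((1 + s0)/2) + p 1 * ((1 + - s0)/2) = (1 + nz)/2" 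
      unfolding p_def using sp by (simp add: field_simps)
    have e11': "p 0 * ((1 - s0)/2) + p 1 * ((1 - - s0)/2) = (1 - nz)/2" 
      unfolding p_def using sp by (simp add: field_simps)
    have pd: "pure_decomp (bloch_state nx ny nz) 2 p \<psi>"
      unfolding pure_decomp_def dim_bloch decomp_mat
    proof (intro conjI)
      show "\<forall>e<2. 0 < p e \<and> unit_state 2 (\<psi> e)" using ppos sf1(1) sf2(1)
        by (auto simp: less2 \<psi>_def)
      show "(\<Sum>e<2. p e) = 1" unfolding sum2 by (rule psum)
      have h1: "(\<Sum>e<2. complex_of_real (p e) * (\<psi> e $ 0 * cnj (\<psi> e $ 0))) = complex_of_real ((1 + nz)/2)"
      proof -
        have "(\<Sum>e<2. complex_of_real (p e) * (\<psi> e $ 0 * cnj (\<psi> e $ 0))) = complex_of_real (p 0) * complex_of_real ((1+s0)/2) + complex_of_real (p 1) * complex_of_real ((1 + - s0)/2)"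
          unfolding sum2 \<psi>_def by (simp add: sf1(3) sf2(3))
        also have "\<dots> = complex_of_real ((1 + nz)/2)" unfolding of_real_mult[symmetric] of_real_add[symmetric] e00' ..
        finally show ?thesis .
      qed
      have h4: "(\<Sum>e<2. complex_of_real (p e) * (\<psi> e $ 1 * cnj (\<psi> e $ 1))) = complex_of_real ((1 - nz)/2)"
      proof -
        have "(\<Sum>e<2. complex_of_real (p e) * (\<psi> e $ 1 * cnj (\<psi> e $ 1))) = complex_of_real (p 0) * complex_of_real ((1-s0)/2) + complex_of_real (p 1) * complex_of_real ((1 - - s0)/2)"
          unfolding sum2 \<psi>_def by (simp add: sf1(4) sf2(4) sf1'(4) sf2'(4))
        also have "\<dots> = complex_of_real ((1 - nz)/2)" unfolding of_real_mult[symmetric] of_real_add[symmetric] e11' ..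
        finally show ?thesis .
      qed
      have h2: "(\<Sum>e<2. complex_of_real (p e) * (\<psi> e $ 0 * cnj (\<psi> e $ 1))) = cnj w / 2"
      proof -
        have "(\<Sum>e<2. complex_of_real (p e) * (\<psi> e $ 0 * cnj (\<psi> e $ 1))) = complex_of_real (p 0 + p 1) * (complex_of_real c * cnj ph) / 2"
          unfolding sum2 \<psi>_def by (simp add: sf1(5) sf2(5) sf1'(5) sf2'(5) k1 k2 algebra_simps)
        thus ?thesis unfolding psum ccph by simp
      qed
      have h3: "(\<Sum>e<2. complex_of_real (p e) * (\<psi> e $ 1 * cnj (\<psi> e $ 0))) = w / 2"
      proof -
        have "(\<Sum>e<2. complex_of_real (p e) * (\<psi> e $ 1 * cnj (\<psi> e $ 0))) = complex_of_real (p 0) * (complex_of_real (sqrt (1 - s0^2) / 2) * ph) + complex_of_real (p 1) * (complex_of_real (sqrt (1 - (-s0)^2) / 2) * ph)"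
          unfolding sum2 \<psi>_def by (simp add: sf1(6) sf2(6) sf1'(6) sf2'(6))
        also have "\<dots> = complex_of_real (p 0 + p 1) * (complex_of_real c * ph) / 2"
          unfolding k1 k2 by (simp add: algebra_simps)
        finally have "(\<Sum>e<2. complex_of_real (p e) * (\<psi> e $ 1 * cnj (\<psi> e $ 0))) = complex_of_real (p 0 + p 1) * (complex_of_real c * ph) / 2" .
        thus ?thesis unfolding psum cph by simp
      qed
      show "bloch_state nx ny nz = m2 (\<Sum>e<2. complex_of_real (p e) * (\<psi> e $ 0 * cnj (\<psi> e $ 0)))
       (\<Sum>e<2. complex_of_real (p e) * (\<psi> e $ 0 * cnj (\<psi> e $ 1)))
       (\<Sum>e<2. complex_of_real (p e) * (\<psi> e $ 1 * cnj (\<psi> e $ 0)))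
       (\<Sum>e<2. complex_of_real (p e) * (\<psi> e $ 1 * cnj (\<psi> e $ 1)))"
        unfolding h1 h2 h3 h4 bl by simp
    qed
    moreover have "(\<Sum>e<2. p e * RI_pure 2 (\<psi> e)) = V"
    proof -
      have "(\<Sum>e<2. p e * RI_pure 2 (\<psi> e)) = p 0 * V + p 1 * V"
        unfolding sum2 \<psi>_def using sf1(2) sf2(2) Vm by (simp add: V_def)
      also have "p 0 * V + p 1 * V = (p 0 + p 1) * V" by (rule distrib_right[symmetric])
      finally show ?thesis unfolding psum by simp
    qed
    ultimately show ?thesis unfolding goalV
      by (intro exI[of _ "2::nat"] exI[of _ p] exI[of _ \<psi>] conjI)
  qed
qed

lemma first_part: assumes h: "nx^2+ny^2+nz^2 \<le> 1"
  shows "RI (bloch_state nx ny nz) = bin_entropy ((1 + sqrt (1 - (C_z nx ny)^2))/2)"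
proof -
  obtain m p \<psi> where pd: "pure_decomp (bloch_state nx ny nz) m p \<psi>"
    and v: "(\<Sum>e<m. p e * RI_pure 2 (\<psi> e)) = bin_entropy ((1 + sqrt (1 - (C_z nx ny)^2))/2)"
    using upper[OF h] by blast
  show ?thesis unfolding RI_def dim_bloch
  proof (rule cInf_eq_minimum)
    show "bin_entropy ((1 + sqrt (1 - (C_z nx ny)^2))/2) \<in> {\<Sum>e<m. p e * RI_pure 2 (\<psi> e) |m p \<psi>. pure_decomp (bloch_state nx ny nz) m p \<psi>}"
      unfolding mem_Collect_eq
      by (intro exI[of _ m] exI[of _ p] exI[of _ \<psi>] conjI pd v[symmetric])
  next
    fix y assume "y \<in> {\<Sum>e<m. p e * RI_pure 2 (\<psi> e) |m p \<psi>. pure_decomp (bloch_state nx ny nz) m p \<psi>}"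
    then obtain m' p' \<psi>' where y: "y = (\<Sum>e<m'. p' e * RI_pure 2 (\<psi>' e))" and pd': "pure_decomp (bloch_state nx ny nz) m' p' \<psi>'"
      unfolding mem_Collect_eq by blast
    show "bin_entropy ((1 + sqrt (1 - (C_z nx ny)^2))/2) \<le> y" unfolding y by (rule lower[OF h pd'])
  qed
qed

lemma third_part: "C_z nx ny = C_l1 (bloch_state nx ny nz)"
  unfolding C_l1_def C_z_def bloch_m2 by (simp add: norm_divide cmod_w cmod_w')

theorem mainTheorem7:
  fixes nx ny nz :: real
  assumes "nx\<^sup>2 + ny\<^sup>2 + nz\<^sup>2 \<le> 1"
  shows "RI (bloch_state nx ny nz) = bin_entropy ((1 + sqrt (1 - (C_z nx ny)\<^sup>2)) / 2)
    \<and> (\<forall>\<eta>1 \<eta>2. char_poly (bloch_state nx ny nz * sigma_x * map_mat cnj (bloch_state nx ny nz) * sigma_x)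
                 = [:- \<eta>1, 1:] * [:- \<eta>2, 1:] \<longrightarrow>
          \<eta>1 \<in> \<real> \<and> \<eta>2 \<in> \<real> \<and> Re \<eta>1 \<ge> 0 \<and> Re \<eta>2 \<ge> 0 \<and>
          C_z nx ny = \<bar>sqrt (Re \<eta>1) - sqrt (Re \<eta>2)\<bar>)
    \<and> C_z nx ny = C_l1 (bloch_state nx ny nz)"
  using first_part[OF assms] second_part[OF assms] third_part by blast
end
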